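(* Let $D$ be a squarefree integer and $q>3$ a prime not dividing $D$. Then $H_D^{(q)}\subset E^{(1)}(\mathbb{Q})$ depends only on the Legendre symbol $(D/q)$; denote it $H^{(q),(D/q)}$. Let $O_q$ be the order of the reduction of $P$ in $E^{(1)}(\mathbb{F}_q)$. Then there exist subsets $M_1^{(q)}$ and $M_{-1}^{(q)}$ of $\mathbb{Z}/O_q\mathbb{Z}$ such that $H^{(q),(D/q)}=\{kP : k\text{ odd and } k\equiv m\pmod{O_q}\text{ for some } m\in M_{(D/q)}^{(q)}\}$. Moreover, $1\in M_1^{(q)}$, and for $\varepsilon=\pm1$, if $k\in M_\varepsilon^{(q)}$ then $-k\in M_\varepsilon^{(q)}$.
   Context: $C_D\subset\mathbb{P}^4$ is the curve over $\mathbb{Q}$ given by $X_0^2-2X_1^2+X_2^2=0$, $X_1^2-2X_2^2+DX_3^2=0$, $X_2^2-2DX_3^2+X_4^2=0$, and $C_D(\mathbb{F}_q)$ the $\mathbb{F}_q$-points of its reduction. $E^{(1)}: y^2=x(x+2)(x+6)$, $P=(6,24)$, $H=\{kP: k\text{ odd}\}$, $\phi:C_D\to E^{(1)}$ is $\phi([x_0:\dots:x_4])=(6x_0^2/x_4^2,\,24x_0x_1x_2/x_4^3)$ with reduction $\phi_q$, $\mathrm{red}_q$ is reduction mod $q$ on $E^{(1)}(\mathbb{Q})$, and $H_D^{(q)}:=\{R\in H : \mathrm{red}_q(R)\in\phi_q(C_D(\mathbb{F}_q))\}$. *)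

theory Defs
  imports "HOL-Number_Theory.Number_Theory" "HOL-Computational_Algebra.Squarefree"
begin

datatype 'a ecpt = Inf | Pt 'a 'a

definition on_E1 :: "rat ecpt \<Rightarrow> bool" where
  "on_E1 R = (case R of Inf \<Rightarrow> True | Pt x y \<Rightarrow> y^2 = x * (x + 2) * (x + 6))"

definition E1_neg :: "rat ecpt \<Rightarrow> rat ecpt" where
  "E1_neg R = (case R of Inf \<Rightarrow> Inf | Pt x y \<Rightarrow> Pt x (- y))"

text \<open>Chord-tangent group law on E1(Q) (a2 = 8, a4 = 12).\<close>
fun E1_add :: "rat ecpt \<Rightarrow> rat ecpt \<Rightarrow> rat ecpt" where
  "E1_add Inf R = R"
| "E1_add R Inf = R"
| "E1_add (Pt x1 y1) (Pt x2 y2) =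
     (if x1 = x2 \<and> y1 + y2 = 0 then Inf
      else let l = (if x1 = x2 then (3 * x1^2 + 16 * x1 + 12) / (2 * y1)
                    else (y2 - y1) / (x2 - x1));
               x3 = l^2 - 8 - x1 - x2;
               y3 = - (y1 + l * (x3 - x1))
           in Pt x3 y3)"

definition E1_mul :: "int \<Rightarrow> rat ecpt \<Rightarrow> rat ecpt" where
  "E1_mul k R = (if 0 \<le> k then (E1_add R ^^ nat k) Inf
                 else E1_neg ((E1_add R ^^ nat (- k)) Inf))"

definition P0 :: "rat ecpt" where "P0 = Pt 6 24"

definition H :: "rat ecpt set" where
  "H = {E1_mul k P0 | k. odd k}"

text \<open>Arithmetic in F_q, elements represented by integers in {0..<q}.\<close>
definition inv_q :: "nat \<Rightarrow> int \<Rightarrow> int" where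
  "inv_q q a = ((a mod int q) ^ (q - 2)) mod int q"

text \<open>Reduction mod q of a rational whose denominator is prime to q.\<close>
definition rat_red :: "nat \<Rightarrow> rat \<Rightarrow> int" where
  "rat_red q r = (case quotient_of r of (a, b) \<Rightarrow> (a * inv_q q b) mod int q)"

definition red_q :: "nat \<Rightarrow> rat ecpt \<Rightarrow> int ecpt" where
  "red_q q R = (case R of Inf \<Rightarrow> Inf
     | Pt x y \<Rightarrow> (if int q dvd snd (quotient_of x) then Inf
                  else Pt (rat_red q x) (rat_red q y)))"

fun E1q_add :: "nat \<Rightarrow> int ecpt \<Rightarrow> int ecpt \<Rightarrow> int ecpt" where
  "E1q_add q Inf R = R"
| "E1q_add q R Inf = R"
| "E1q_add q (Pt x1 y1) (Pt x2 y2) =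
     (if x1 mod int q = x2 mod int q \<and> (y1 + y2) mod int q = 0 then Inf
      else let l = (if x1 mod int q = x2 mod int q
                    then ((3 * x1^2 + 16 * x1 + 12) * inv_q q (2 * y1)) mod int q
                    else ((y2 - y1) * inv_q q (x2 - x1)) mod int q);
               x3 = (l^2 - 8 - x1 - x2) mod int q;
               y3 = (- (y1 + l * (x3 - x1))) mod int q
           in Pt x3 y3)"

definition E1q_order :: "nat \<Rightarrow> int ecpt \<Rightarrow> nat" where
  "E1q_order q R = (LEAST n. 0 < n \<and> (E1q_add q R ^^ n) Inf = Inf)"

text \<open>F_q-points of the reduction of C_D, given by their (nonzero) homogeneous coordinate
  vectors with entries in {0..<q}; every projective point is represented (by all its
  representatives).\<close>
definition CD_Fq :: "nat \<Rightarrow> int \<Rightarrow> (int \<times> int \<times> int \<times> int \<times> int) set" where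
  "CD_Fq q D = {(x0, x1, x2, x3, x4).
      x0 \<in> {0..<int q} \<and> x1 \<in> {0..<int q} \<and> x2 \<in> {0..<int q} \<and> x3 \<in> {0..<int q} \<and> x4 \<in> {0..<int q}
    \<and> (x0, x1, x2, x3, x4) \<noteq> (0, 0, 0, 0, 0)
    \<and> (x0^2 - 2 * x1^2 + x2^2) mod int q = 0
    \<and> (x1^2 - 2 * x2^2 + D * x3^2) mod int q = 0
    \<and> (x2^2 - 2 * D * x3^2 + x4^2) mod int q = 0}"

text \<open>The reduced map phi_q. Where x4 = 0 (then x0 <> 0 on C_D) the x-coordinate 6 x0^2/x4^2 has a
  pole, so the point maps to the point at infinity.\<close>
definition phi_q :: "nat \<Rightarrow> int \<times> int \<times> int \<times> int \<times> int \<Rightarrow> int ecpt" where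
  "phi_q q X = (case X of (x0, x1, x2, x3, x4) \<Rightarrow>
     (if x4 mod int q = 0 then Inf
      else Pt ((6 * x0^2 * inv_q q (x4^2)) mod int q)
              ((24 * x0 * x1 * x2 * inv_q q (x4^3)) mod int q)))"

definition H_Dq :: "int \<Rightarrow> nat \<Rightarrow> rat ecpt set" where
  "H_Dq D q = {R \<in> H. red_q q R \<in> phi_q q ` CD_Fq q D}"

end

theory Submission
  imports Defs
begin



lemma fermat_int:
  fixes z :: int assumes "prime q" "\<not> int q dvd z"
  shows "int q dvd ((z mod int q) ^ (q - 1) - 1)"
proof -
  define n where "n = nat (z mod int q)"
  have q0: "q > 0" using assms(1) prime_gt_0_nat by blast
  have zn: "z mod int q = int n" unfolding n_def using q0 by simp
  have "\<not> q dvd n"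
  proof
    assume "q dvd n"
    then have "int q dvd int n" by simp
    then have "int q dvd z mod int q" using zn by simp
    then show False using assms(2) by (simp add: dvd_mod_iff)
  qed
  then have "[n ^ (q - 1) = 1] (mod q)" using fermat_theorem assms(1) by blast
  then have "[int n ^ (q - 1) = 1] (mod int q)"
    by (metis cong_int_iff of_nat_1 of_nat_power)
  then show ?thesis using zn by (simp add: cong_iff_dvd_diff)
qed

lemma inv_q_prop:
  fixes z :: int assumes "prime q" "q > 3" "\<not> int q dvd z"
  shows "int q dvd (z * inv_q q z - 1)"
proof -
  have "[z * inv_q q z = (z mod int q) * (z mod int q) ^ (q - 2)] (mod int q)"
    unfolding inv_q_def cong_def by (simp add: mod_mult_left_eq mod_mult_right_eq)
  moreover have "(z mod int q) * (z mod int q) ^ (q - 2) = (z mod int q) ^ (q - 1)"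
  proof -
    have "q - 1 = Suc (q - 2)" using assms(2) by simp
    then show ?thesis by simp
  qed
  ultimately have "[z * inv_q q z = (z mod int q) ^ (q - 1)] (mod int q)" by simp
  moreover have "[(z mod int q) ^ (q - 1) = 1] (mod int q)"
    using fermat_int[OF assms(1,3)] by (simp add: cong_iff_dvd_diff)
  ultimately show ?thesis using cong_trans cong_iff_dvd_diff by blast
qed

definition intq :: "nat \<Rightarrow> rat \<Rightarrow> bool" where
  "intq q r = (\<not> int q dvd snd (quotient_of r))"

definition cr :: "nat \<Rightarrow> rat \<Rightarrow> int \<Rightarrow> bool" where
  "cr q r z = (\<exists>a b. r = of_int a / of_int b \<and> \<not> int q dvd b \<and> int q dvd (z * b - a))"

locale qctx =
  fixes q :: nat
  assumes qp: "prime q" and q3: "q > 3"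
begin

lemma crI: "r = of_int a / of_int b \<Longrightarrow> \<not> int q dvd b \<Longrightarrow> int q dvd (z * b - a) \<Longrightarrow> cr q r z"
  unfolding cr_def by blast

lemma qip: "prime (int q)" using qp by simp

lemma q_ndvd_mult: "\<not> int q dvd a \<Longrightarrow> \<not> int q dvd b \<Longrightarrow> \<not> int q dvd (a * b)"
  using qip prime_dvd_mult_iff by blast

lemma cr_intq: assumes "cr q r z" shows "intq q r"
proof -
  obtain a b where ab: "r = of_int a / of_int b" "\<not> int q dvd b" "int q dvd (z * b - a)"
    using assms unfolding cr_def by blast
  obtain n d where nd: "quotient_of r = (n, d)" by (cases "quotient_of r")
  have d0: "d > 0" using nd quotient_of_denom_pos by blast
  have cop: "coprime n d" using nd quotient_of_coprime by blast
  have rnd: "r = of_int n / of_int d" using nd quotient_of_div by blast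
  have b0: "b \<noteq> 0" using ab(2) by auto
  have "of_int n / of_int d = (of_int a / of_int b :: rat)" using rnd ab(1) by simp
  then have "of_int (n * b) = (of_int (a * d) :: rat)" using b0 d0 by (simp add: field_simps)
  then have e: "n * b = a * d" by (simp only: of_int_eq_iff)
  have "d dvd n * b" using e by simp
  then have "d dvd b" using cop by (simp add: coprime_commute coprime_dvd_mult_right_iff)
  then have "\<not> int q dvd d" using ab(2) dvd_trans by blast
  then show ?thesis unfolding intq_def nd by simp
qed

lemma intq_cr: assumes "intq q r" shows "cr q r (rat_red q r)"
proof -
  obtain n d where nd: "quotient_of r = (n, d)" by (cases "quotient_of r")
  have rnd: "r = of_int n / of_int d" using nd quotient_of_div by blast
  have nq: "\<not> int q dvd d" using assms nd unfolding intq_def by simp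
  have rr: "rat_red q r = (n * inv_q q d) mod int q" unfolding rat_red_def nd by simp
  have "int q dvd (d * inv_q q d - 1)" using inv_q_prop[OF qp q3 nq] .
  then have "int q dvd n * (d * inv_q q d - 1)" by simp
  moreover have "int q dvd ((n * inv_q q d) mod int q - n * inv_q q d)"
    by (simp add: mod_eq_dvd_iff[symmetric])
  then have "int q dvd ((n * inv_q q d) mod int q - n * inv_q q d) * d" by simp
  ultimately have "int q dvd ((n * inv_q q d) mod int q - n * inv_q q d) * d + n * (d * inv_q q d - 1)"
    by simp
  moreover have "((n * inv_q q d) mod int q - n * inv_q q d) * d + n * (d * inv_q q d - 1)
      = (n * inv_q q d) mod int q * d - n" by (simp add: algebra_simps)
  ultimately show ?thesis unfolding rr using rnd nq by (intro crI[of r n d]) simp_all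
qed

lemma cr_unique: assumes "cr q r z" "cr q r w" shows "int q dvd (z - w)"
proof -
  obtain a b where ab: "r = of_int a / of_int b" "\<not> int q dvd b" "int q dvd (z * b - a)"
    using assms(1) unfolding cr_def by blast
  obtain c d where cd: "r = of_int c / of_int d" "\<not> int q dvd d" "int q dvd (w * d - c)"
    using assms(2) unfolding cr_def by blast
  have b0: "b \<noteq> 0" "d \<noteq> 0" using ab(2) cd(2) by auto
  have "of_int a / of_int b = (of_int c / of_int d :: rat)" using ab(1) cd(1) by simp
  then have "of_int (a * d) = (of_int (c * b) :: rat)" using b0 by (simp add: field_simps)
  then have e: "a * d = c * b" by (simp only: of_int_eq_iff)
  have "int q dvd (z * b - a) * d - (w * d - c) * b" using ab(3) cd(3) by simp
  moreover have "(z * b - a) * d - (w * d - c) * b = (z - w) * (b * d)" using e by (simp add: algebra_simps)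
  ultimately have "int q dvd (z - w) * (b * d)" by simp
  then show ?thesis using q_ndvd_mult[OF ab(2) cd(2)] qip prime_dvd_mult_iff by blast
qed

lemma cr_red: assumes "cr q r z" shows "rat_red q r = z mod int q"
proof -
  have "cr q r (rat_red q r)" using intq_cr cr_intq assms by blast
  then have "int q dvd (rat_red q r - z)" using cr_unique assms by blast
  moreover have "rat_red q r mod int q = rat_red q r"
    unfolding rat_red_def by (simp split: prod.split)
  ultimately show ?thesis by (metis mod_eq_dvd_iff)
qed

lemma rat_red_range: "0 \<le> rat_red q r \<and> rat_red q r < int q"
  using qp prime_gt_0_nat unfolding rat_red_def by (simp split: prod.split)

lemma cr_cong: "cr q r z \<Longrightarrow> int q dvd (z - w) \<Longrightarrow> cr q r w"
  unfolding cr_def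
proof (elim exE conjE)
  fix a b assume h: "r = of_int a / of_int b" "\<not> int q dvd b" "int q dvd z * b - a" "int q dvd z - w"
  have "int q dvd (z * b - a) - (z - w) * b" using h by simp
  moreover have "(z * b - a) - (z - w) * b = w * b - a" by (simp add: algebra_simps)
  ultimately show "\<exists>a b. r = of_int a / of_int b \<and> \<not> int q dvd b \<and> int q dvd w * b - a"
    using h by auto
qed

lemma cr_int: "cr q (of_int n) n"
  unfolding cr_def by (rule exI[of _ n], rule exI[of _ 1]) (use qp q3 in \<open>auto simp: zdvd1_eq\<close>)

lemma cr_add: assumes "cr q r z" "cr q s w" shows "cr q (r + s) (z + w)"
proof -
  obtain a b where ab: "r = of_int a / of_int b" "\<not> int q dvd b" "int q dvd (z * b - a)"
    using assms(1) unfolding cr_def by blast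
  obtain c d where cd: "s = of_int c / of_int d" "\<not> int q dvd d" "int q dvd (w * d - c)"
    using assms(2) unfolding cr_def by blast
  have b0: "b \<noteq> 0" "d \<noteq> 0" using ab(2) cd(2) by auto
  have "r + s = of_int (a * d + c * b) / of_int (b * d)" using ab(1) cd(1) b0 by (simp add: field_simps)
  moreover have "int q dvd (z * b - a) * d + (w * d - c) * b" using ab(3) cd(3) by simp
  moreover have "(z * b - a) * d + (w * d - c) * b = (z + w) * (b * d) - (a * d + c * b)"
    by (simp add: algebra_simps)
  ultimately show ?thesis using q_ndvd_mult[OF ab(2) cd(2)] by (intro crI[of _ "a*d+c*b" "b*d"]) simp_all
qed

lemma cr_mult: assumes "cr q r z" "cr q s w" shows "cr q (r * s) (z * w)"
proof -
  obtain a b where ab: "r = of_int a / of_int b" "\<not> int q dvd b" "int q dvd (z * b - a)"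
    using assms(1) unfolding cr_def by blast
  obtain c d where cd: "s = of_int c / of_int d" "\<not> int q dvd d" "int q dvd (w * d - c)"
    using assms(2) unfolding cr_def by blast
  have b0: "b \<noteq> 0" "d \<noteq> 0" using ab(2) cd(2) by auto
  have "r * s = of_int (a * c) / of_int (b * d)" using ab(1) cd(1) b0 by (simp add: field_simps)
  moreover have "int q dvd (z * b - a) * (w * d) + (w * d - c) * a" using ab(3) cd(3) by simp
  moreover have "(z * b - a) * (w * d) + (w * d - c) * a = (z * w) * (b * d) - (a * c)"
    by (simp add: algebra_simps)
  ultimately show ?thesis using q_ndvd_mult[OF ab(2) cd(2)] by (intro crI[of _ "a*c" "b*d"]) simp_all
qed

lemma cr_uminus: assumes "cr q r z" shows "cr q (- r) (- z)"
  using cr_mult[OF cr_int[of "-1"] assms] by simp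

lemma cr_diff: assumes "cr q r z" "cr q s w" shows "cr q (r - s) (z - w)"
  using cr_add[OF assms(1) cr_uminus[OF assms(2)]] by simp

lemma cr_numeral: "cr q (numeral n) (numeral n)"
  using cr_int[of "numeral n"] by simp

lemma cr_0: "cr q 0 0" using cr_int[of 0] by simp
lemma cr_1: "cr q 1 1" using cr_int[of 1] by simp

lemma cr_power: assumes "cr q r z" shows "cr q (r ^ n) (z ^ n)"
  by (induction n) (auto intro: cr_mult assms cr_1)

lemma cr_inverse: assumes "cr q r z" "\<not> int q dvd z" shows "cr q (inverse r) (inv_q q z)"
proof -
  obtain a b where ab: "r = of_int a / of_int b" "\<not> int q dvd b" "int q dvd (z * b - a)"
    using assms(1) unfolding cr_def by blast
  have b0: "b \<noteq> 0" using ab(2) by auto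
  have na: "\<not> int q dvd a"
  proof
    assume "int q dvd a"
    then have "int q dvd z * b" using ab(3) by (metis dvd_add diff_add_cancel)
    then show False using assms(2) ab(2) qip prime_dvd_mult_iff by blast
  qed
  have "inverse r = of_int b / of_int a" using ab(1) by simp
  moreover have iz: "int q dvd (z * inv_q q z - 1)" using inv_q_prop[OF qp q3 assms(2)] .
  have "int q dvd (z * b - a) * inv_q q z - b * (z * inv_q q z - 1)" using ab(3) iz by simp
  moreover have "(z * b - a) * inv_q q z - b * (z * inv_q q z - 1) = b - inv_q q z * a"
    by (simp add: algebra_simps)
  ultimately have "int q dvd (inv_q q z * a - b)"
    using dvd_minus_iff minus_diff_eq by (metis (no_types))
  then show ?thesis using \<open>inverse r = _\<close> na crI by simp
qed

lemma cr_divide: assumes "cr q r z" "cr q s w" "\<not> int q dvd w" shows "cr q (r / s) (z * inv_q q w)"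
  using cr_mult[OF assms(1) cr_inverse[OF assms(2,3)]] by (simp add: divide_inverse)

end




lemma chord_id:
  fixes x1 y1 x2 l :: rat
  assumes "x3 = l^2 - 8 - x1 - x2"
  shows "(x2 - x1) * (x3 * (x3 + 2) * (x3 + 6) - (y1 + l * (x3 - x1))^2)
     = (x2*(x2+2)*(x2+6) - (y1 + l*(x2-x1))^2) * (x3 - x1) - (x1*(x1+2)*(x1+6) - y1^2) * (x3 - x2)"
  unfolding assms by (simp add: algebra_simps power2_eq_square)

lemma chord_on:
  fixes x1 y1 x2 y2 l :: rat
  assumes "y1^2 = x1*(x1+2)*(x1+6)" "y2^2 = x2*(x2+2)*(x2+6)" "x1 \<noteq> x2"
    "l * (x2 - x1) = y2 - y1"
  shows "(-(y1 + l*((l^2-8-x1-x2) - x1)))^2 = (l^2-8-x1-x2)*((l^2-8-x1-x2)+2)*((l^2-8-x1-x2)+6)"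
proof -
  define x3 where "x3 = l^2 - 8 - x1 - x2"
  have y2: "y2 = y1 + l * (x2 - x1)" using assms(4) by simp
  have "(x2 - x1) * (x3 * (x3 + 2) * (x3 + 6) - (y1 + l * (x3 - x1))^2) = 0"
    using chord_id[OF x3_def] assms(1,2) y2 by simp
  then have "x3 * (x3 + 2) * (x3 + 6) = (y1 + l * (x3 - x1))^2" using assms(3) by simp
  then show ?thesis unfolding x3_def[symmetric] power2_minus by simp
qed

lemma tangent_id:
  fixes x1 y1 l :: rat
  assumes "x3 = l^2 - 8 - x1 - x1"
  shows "x3 * (x3 + 2) * (x3 + 6) - (y1 + l * (x3 - x1))^2
     = (x1*(x1+2)*(x1+6) - y1^2) + (3 * x1^2 + 16 * x1 + 12 - l * (2 * y1)) * (x3 - x1)"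
  unfolding assms by (simp add: algebra_simps power2_eq_square)

lemma tangent_on:
  fixes x1 y1 l :: rat
  assumes "y1^2 = x1*(x1+2)*(x1+6)"
    "l * (2 * y1) = 3 * x1^2 + 16 * x1 + 12"
  shows "(-(y1 + l*((l^2-8-x1-x1) - x1)))^2 = (l^2-8-x1-x1)*((l^2-8-x1-x1)+2)*((l^2-8-x1-x1)+6)"
proof -
  define x3 where "x3 = l^2 - 8 - x1 - x1"
  have "x3 * (x3 + 2) * (x3 + 6) - (y1 + l * (x3 - x1))^2 = 0"
    using tangent_id[OF x3_def] assms by simp
  then show ?thesis unfolding x3_def[symmetric] power2_minus by simp
qed

lemma E1_add_on:
  assumes "on_E1 A" "on_E1 B" shows "on_E1 (E1_add A B)"
proof (cases A)
  case Inf then show ?thesis using assms by simp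
next
  case (Pt x1 y1)
  show ?thesis
  proof (cases B)
    case Inf then show ?thesis using assms Pt by simp
  next
    case (Pt x2 y2)
    have c1: "y1^2 = x1*(x1+2)*(x1+6)" using assms \<open>A = Pt x1 y1\<close> by (simp add: on_E1_def)
    have c2: "y2^2 = x2*(x2+2)*(x2+6)" using assms Pt by (simp add: on_E1_def)
    consider "x1 = x2 \<and> y1 + y2 = 0" | "x1 = x2 \<and> y1 + y2 \<noteq> 0" | "x1 \<noteq> x2" by blast
    then show ?thesis
    proof cases
      case 1 then show ?thesis using \<open>A = Pt x1 y1\<close> Pt by (simp add: on_E1_def)
    next
      case 2
      then have "y2^2 = y1^2" using c1 c2 by simp
      then have "y2 = y1 \<or> y2 = - y1" by (simp add: power2_eq_iff)
      then have e: "y2 = y1" using 2 by auto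
      then have y0: "y1 \<noteq> 0" using 2 by auto
      define l where "l = (3 * x1^2 + 16 * x1 + 12) / (2 * y1)"
      have "l * (2 * y1) = 3 * x1^2 + 16 * x1 + 12" unfolding l_def using y0 by simp
      from tangent_on[OF c1 this] have h: "(-(y1 + l*((l^2-8-x1-x1) - x1)))^2 = (l^2-8-x1-x1)*((l^2-8-x1-x1)+2)*((l^2-8-x1-x1)+6)" .
      have "E1_add A B = Pt (l^2-8-x1-x1) (-(y1 + l*((l^2-8-x1-x1) - x1)))"
        using \<open>A = Pt x1 y1\<close> Pt 2 e by (simp add: Let_def l_def)
      then show ?thesis using h by (simp add: on_E1_def)
    next
      case 3
      define l where "l = (y2 - y1) / (x2 - x1)"
      have "l * (x2 - x1) = y2 - y1" unfolding l_def using 3 by simp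
      from chord_on[OF c1 c2 3 this] have h: "(-(y1 + l*((l^2-8-x1-x2) - x1)))^2 = (l^2-8-x1-x2)*((l^2-8-x1-x2)+2)*((l^2-8-x1-x2)+6)" .
      have "E1_add A B = Pt (l^2-8-x1-x2) (-(y1 + l*((l^2-8-x1-x2) - x1)))"
        using \<open>A = Pt x1 y1\<close> Pt 3 by (simp add: Let_def l_def)
      then show ?thesis using h by (simp add: on_E1_def)
    qed
  qed
qed

lemma E1_neg_on: "on_E1 A \<Longrightarrow> on_E1 (E1_neg A)"
  by (cases A) (auto simp: on_E1_def E1_neg_def)

lemma P0_on: "on_E1 P0" by (simp add: on_E1_def P0_def)

lemma iter_on: "on_E1 ((E1_add P0 ^^ n) Inf)"
proof (induction n)
  case 0 then show ?case by (simp add: on_E1_def)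
next
  case (Suc n) then show ?case using E1_add_on P0_on by simp
qed

lemma E1_mul_on: "on_E1 (E1_mul k P0)"
  unfolding E1_mul_def using iter_on E1_neg_on by auto

lemma third_Q:
  assumes "on_E1 B" shows "E1_add P0 (E1_neg (E1_add P0 B)) = E1_neg B"
proof (cases B)
  case Inf then show ?thesis by (simp add: P0_def E1_neg_def)
next
  case (Pt xb yb)
  have c: "yb^2 = xb*(xb+2)*(xb+6)" using assms Pt by (simp add: on_E1_def)
  consider "xb = 6 \<and> 24 + yb = 0" | "xb = 6 \<and> 24 + yb \<noteq> 0" | "xb \<noteq> 6" by blast
  then show ?thesis
  proof cases
    case 1 then show ?thesis using Pt by (simp add: P0_def E1_neg_def)
  next
    case 2
    then have "yb^2 = 24^2" using c by simp
    then have "(yb - 24) * (yb + 24) = 0" by (simp add: algebra_simps power2_eq_square)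
    then have "yb = 24 \<or> yb = -24" by (simp add: eq_neg_iff_add_eq_0)
    then have "yb = 24" using 2 by auto
    then show ?thesis using Pt 2 by (simp add: P0_def E1_neg_def Let_def power2_eq_square)
  next
    case 3
    define l where "l = (yb - 24) / (xb - 6)"
    have le: "l * (xb - 6) = yb - 24" unfolding l_def using 3 by simp
    define x3 where "x3 = l^2 - 8 - 6 - xb"
    define y3 where "y3 = - (24 + l * (x3 - 6))"
    have W: "E1_add P0 B = Pt x3 y3" using Pt 3 unfolding P0_def
      by (simp add: Let_def l_def x3_def y3_def)
    have nW: "E1_neg (E1_add P0 B) = Pt x3 (- y3)" using W by (simp add: E1_neg_def)
    show ?thesis
    proof (cases "x3 = 6")
      case True
      have "(l - 9/2) * (l^2 - 26) = 0"
      proof -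
        have xb: "xb = l^2 - 20" using True unfolding x3_def by simp
        have yb: "yb = 24 + l * (xb - 6)" using le by simp
        have "yb^2 - xb*(xb+2)*(xb+6) = 48 * ((l - 9/2) * (l^2 - 26))"
          unfolding yb xb by (simp add: algebra_simps power2_eq_square)
        then show ?thesis using c by simp
      qed
      moreover have "l^2 \<noteq> 26" using True 3 unfolding x3_def by auto
      ultimately have l: "l = 9/2" by simp
      have xb: "xb = 1/4" using True l unfolding x3_def by (simp add: power2_eq_square)
      have yb: "yb = -15/8" using le l xb by simp
      have "- y3 = 24" using True unfolding y3_def by simp
      then show ?thesis using nW Pt xb yb True by (simp add: P0_def E1_neg_def Let_def power2_eq_square)
    next
      case False
      have s: "(- y3 - 24) / (x3 - 6) = l" using False unfolding y3_def by (simp add: field_simps)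
      have "- y3 + 24 \<noteq> 0 \<or> x3 \<noteq> 6" using False by simp
      have le2: "yb + l * 6 = l * xb + 24" using le by (simp add: algebra_simps)
      then show ?thesis using nW Pt False s
        by (simp add: P0_def E1_neg_def Let_def x3_def y3_def algebra_simps)
    qed
  qed
qed




context qctx begin

lemma q_pos: "int q > 0" using q3 by simp

lemma inv_q_1: "inv_q q 1 = 1"
  using q3 unfolding inv_q_def by simp

lemma intq_iff: "intq q r \<longleftrightarrow> (\<exists>z. cr q r z)"
  using cr_intq intq_cr by blast

lemma cr_mod: "cr q r z \<Longrightarrow> cr q r (z mod int q)"
  by (erule cr_cong) (simp add: mod_eq_dvd_iff[symmetric])

lemma range_eq: "0 \<le> x \<Longrightarrow> x < int q \<Longrightarrow> 0 \<le> y \<Longrightarrow> y < int q \<Longrightarrow> x = y \<longleftrightarrow> int q dvd (x - y)"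
proof -
  assume h: "0 \<le> x" "x < int q" "0 \<le> y" "y < int q"
  have "x = y \<longleftrightarrow> x mod int q = y mod int q" using h by simp
  also have "\<dots> \<longleftrightarrow> int q dvd (x - y)" by (rule mod_eq_dvd_iff)
  finally show ?thesis .
qed

lemma q_ndvd_2: "\<not> int q dvd 2"
proof
  assume "int q dvd 2" then have "int q \<le> 2" using zdvd_imp_le by presburger
  then show False using q3 by simp
qed

lemma q_ndvd_3: "\<not> int q dvd 3"
proof
  assume "int q dvd 3" then have "int q \<le> 3" using zdvd_imp_le by presburger
  then show False using q3 by simp
qed

lemma q_ndvd_48: "\<not> int q dvd 48"
proof -
  have "\<not> int q dvd 2 * (2 * (2 * (2 * 3)))"
    by (intro q_ndvd_mult q_ndvd_2 q_ndvd_3)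
  then show ?thesis by simp
qed

lemma sq_intq: assumes "intq q (r^2)" shows "intq q r"
proof -
  obtain z where "cr q (r^2) z" using assms intq_iff by blast
  then obtain a b where ab: "r^2 = of_int a / of_int b" "\<not> int q dvd b"
    unfolding cr_def by blast
  obtain n d where nd: "quotient_of r = (n, d)" by (cases "quotient_of r")
  have d0: "d > 0" using nd quotient_of_denom_pos by blast
  have cop: "coprime n d" using nd quotient_of_coprime by blast
  have rnd: "r = of_int n / of_int d" using nd quotient_of_div by blast
  have b0: "b \<noteq> 0" using ab(2) by auto
  have "(of_int n / of_int d)^2 = (of_int a / of_int b :: rat)" using rnd ab(1) by simp
  then have "of_int (n^2 * b) = (of_int (a * d^2) :: rat)" using b0 d0
    by (simp add: field_simps power2_eq_square)
  then have e: "n^2 * b = a * d^2" by (simp only: of_int_eq_iff)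
  have "\<not> int q dvd d"
  proof
    assume h: "int q dvd d"
    then have "int q dvd a * d^2" by (simp add: power2_eq_square)
    then have "int q dvd n^2 * b" using e by simp
    then have "int q dvd n^2" using ab(2) qip prime_dvd_mult_iff by blast
    then have "int q dvd n" using qip prime_dvd_power by blast
    then have "int q dvd gcd n d" using h by simp
    moreover have "gcd n d = 1" using cop by (simp add: coprime_iff_gcd_eq_1)
    ultimately have "int q dvd 1" by metis
    then have "int q \<le> 1" using zdvd_imp_le by presburger
    then show False using q3 by simp
  qed
  then show ?thesis unfolding intq_def nd by simp
qed

lemma not_intq: assumes "cr q s 0" "cr q (r * s) w" "\<not> int q dvd w" shows "\<not> intq q r"
proof
  assume "intq q r"
  then obtain z where "cr q r z" using intq_iff by blast
  then have "cr q (r * s) (z * 0)" using cr_mult assms(1) by blast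
  then have "int q dvd (0 - w)" using cr_unique assms(2) by (metis mult_zero_right)
  then show False using assms(3) by simp
qed

lemma red_Pt_int: "intq q x \<Longrightarrow> red_q q (Pt x y) = Pt (rat_red q x) (rat_red q y)"
  unfolding red_q_def intq_def by simp

lemma red_Pt_nonint: "\<not> intq q x \<Longrightarrow> red_q q (Pt x y) = Inf"
  unfolding red_q_def intq_def by simp

lemma cr_ndvd: "cr q r z \<Longrightarrow> cr q r w \<Longrightarrow> \<not> int q dvd z \<Longrightarrow> \<not> int q dvd w"
proof -
  assume h: "cr q r z" "cr q r w" "\<not> int q dvd z"
  have "int q dvd (z - w)" using cr_unique h by blast
  then show "\<not> int q dvd w" using h(3) dvd_add[of "int q" "z - w" w] by auto
qed

end



context qctx begin

definition "r6 = rat_red q 6"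
definition "r24 = rat_red q 24"

lemma cr_num_int: "intq q (numeral n)" using cr_intq cr_numeral by blast

lemma cr6: "cr q 6 r6" unfolding r6_def using intq_cr cr_num_int by blast
lemma cr24: "cr q 24 r24" unfolding r24_def using intq_cr cr_num_int by blast
lemma r6_range: "0 \<le> r6 \<and> r6 < int q" unfolding r6_def using rat_red_range by blast
lemma r24_range: "0 \<le> r24 \<and> r24 < int q" unfolding r24_def using rat_red_range by blast
lemma r6_cong: "int q dvd r6 - 6" using cr_unique[OF cr6 cr_numeral] by simp
lemma r24_cong: "int q dvd r24 - 24" using cr_unique[OF cr24 cr_numeral] by simp

lemma red_P0: "red_q q P0 = Pt r6 r24"
  unfolding P0_def r6_def r24_def using red_Pt_int cr_num_int by simp

lemma cr_div1: "cr q r z \<Longrightarrow> cr q s 1 \<Longrightarrow> cr q (r / s) z"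
  using cr_divide[of r z s 1] inv_q_1 q3 by (simp add: zdvd1_eq)

lemma E1_add_P0_chord:
  "xa \<noteq> 6 \<Longrightarrow> l = (ya - 24) / (xa - 6) \<Longrightarrow> x3 = l^2 - 8 - 6 - xa \<Longrightarrow> y3 = -(24 + l * (x3 - 6))
   \<Longrightarrow> E1_add P0 (Pt xa ya) = Pt x3 y3"
  by (simp add: P0_def Let_def)

lemma Fq_chord:
  assumes "0 \<le> a" "a < int q" "a \<noteq> r6" "L = ((b - r24) * inv_q q (a - r6)) mod int q"
    "X3 = (L^2 - 8 - r6 - a) mod int q" "Y3 = (- (r24 + L * (X3 - r6))) mod int q"
  shows "E1q_add q (Pt r6 r24) (Pt a b) = Pt X3 Y3"
proof -
  have "r6 mod int q = r6" using r6_range by simp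
  moreover have "a mod int q = a" using assms by simp
  ultimately show ?thesis using assms by (simp add: Let_def)
qed

lemma Fq_tan:
  assumes "a = r6" "(r24 + b) mod int q \<noteq> 0" "L = ((3 * r6^2 + 16 * r6 + 12) * inv_q q (2 * r24)) mod int q"
    "X3 = (L^2 - 8 - r6 - a) mod int q" "Y3 = (- (r24 + L * (X3 - r6))) mod int q"
  shows "E1q_add q (Pt r6 r24) (Pt a b) = Pt X3 Y3"
  using assms by (simp add: Let_def)

lemma Fq_inf:
  assumes "a = r6" "(r24 + b) mod int q = 0"
  shows "E1q_add q (Pt r6 r24) (Pt a b) = Inf"
  using assms by simp

lemma intq_of_int: "intq q (of_int k)" using cr_intq cr_int by blast

lemma kernel:
  assumes c: "ya^2 = xa*(xa+2)*(xa+6)" and ni: "\<not> intq q xa"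
  shows "red_q q (E1_add P0 (Pt xa ya)) = Pt r6 r24"
proof -
  obtain n d where nd: "quotient_of xa = (n, d)" by (cases "quotient_of xa")
  have qd: "int q dvd d" using ni nd unfolding intq_def by simp
  have d0: "d > 0" using nd quotient_of_denom_pos by blast
  have cop: "coprime n d" using nd quotient_of_coprime by blast
  have xnd: "xa = of_int n / of_int d" using nd quotient_of_div by blast
  have qn: "\<not> int q dvd n"
  proof
    assume "int q dvd n"
    with qd have "int q dvd gcd n d" by simp
    moreover have "gcd n d = 1" using cop by (simp add: coprime_iff_gcd_eq_1)
    ultimately have "int q dvd 1" by metis
    then have "int q \<le> 1" using zdvd_imp_le by presburger
    then show False using q3 by simp
  qed
  then have n0: "n \<noteq> 0" by auto
  have x0: "xa \<noteq> 0" using xnd n0 d0 by simp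
  define u where "u = 1 / xa"
  have cu: "cr q u 0" unfolding u_def xnd using qn qd by (intro crI[of _ d n]) simp_all
  have u0: "u \<noteq> 0" unfolding u_def using x0 by simp
  have nx: "xa \<noteq> 6" "xa \<noteq> -2" "xa \<noteq> -6" "xa \<noteq> 0"
    using ni intq_of_int[of 6] intq_of_int[of "-2"] intq_of_int[of "-6"] intq_of_int[of 0] x0 by auto
  have y0: "ya \<noteq> 0"
  proof
    assume "ya = 0"
    then have "xa * ((xa + 2) * (xa + 6)) = 0" using c by simp
    then show False using nx by (auto simp: add_eq_0_iff)
  qed
  define t where "t = xa / ya"
  have t0: "t \<noteq> 0" unfolding t_def using x0 y0 by simp
  define g where "g = 1 + 8 * u + 12 * u^2"
  have f0: "(xa + 2) * (xa + 6) \<noteq> 0" using nx by (auto simp: add_eq_0_iff)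
  have t2: "t^2 = xa / ((xa + 2) * (xa + 6))"
  proof -
    have "t^2 = xa^2 / (xa * ((xa + 2) * (xa + 6)))" unfolding t_def power_divide c by (simp add: mult.assoc)
    also have "\<dots> = xa / ((xa + 2) * (xa + 6))" using x0 by (simp add: power2_eq_square)
    finally show ?thesis .
  qed
  have g2: "g = (xa + 2) * (xa + 6) / xa^2"
    unfolding g_def u_def using x0 by (simp add: field_simps power2_eq_square)
  have rel: "u = t^2 * g"
  proof -
    define F where "F = (xa + 2) * (xa + 6)"
    have F0: "F \<noteq> 0" using f0 unfolding F_def .
    have "t^2 * g = (xa / F) * (F / (xa * xa))" unfolding t2 g2 F_def by (simp add: power2_eq_square)
    also have "\<dots> = 1 / xa" using F0 x0 by (simp add: field_simps)
    finally show ?thesis unfolding u_def by simp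
  qed
  have crg: "cr q g 1"
  proof -
    have "cr q (1 + 8 * u + 12 * u^2) (1 + 8 * 0 + 12 * 0^2)"
      by (intro cr_add cr_mult cr_power cr_numeral cr_1 cu)
    then show ?thesis unfolding g_def by simp
  qed
  have g0: "g \<noteq> 0" unfolding g2 using x0 f0 by simp
  have t2cr: "cr q (t^2) 0"
  proof -
    have "t^2 = u / g" using rel g0 by simp
    moreover have "cr q (u / g) 0" using cr_div1[OF cu crg] .
    ultimately show ?thesis by simp
  qed
  have it: "intq q t" using sq_intq t2cr cr_intq by blast
  then have crt1: "cr q t (rat_red q t)" using intq_cr by blast
  then have "cr q (t^2) ((rat_red q t)^2)" by (rule cr_power)
  then have "int q dvd (rat_red q t)^2" using cr_unique[OF _ t2cr] by simp
  then have "int q dvd rat_red q t" using qip prime_dvd_power by blast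
  then have ct: "cr q t 0" using cr_cong[OF crt1] by simp
  define K where "K = -48 * g + 576 * u * t * g + t * g * (216 - 720 * u)"
  have crK: "cr q K (-48)"
  proof -
    have "cr q K (-48 * 1 + 576 * 0 * 0 * 1 + 0 * 1 * (216 - 720 * 0))"
      unfolding K_def by (intro cr_add cr_mult cr_diff cr_uminus cr_numeral crg cu ct)
    then show ?thesis by simp
  qed
  have u6: "1 - 6 * u \<noteq> 0" using nx unfolding u_def by (auto simp: field_simps)
  have cr16: "cr q (1 - 6 * u) 1"
  proof -
    have "cr q (1 - 6 * u) (1 - 6 * 0)" by (intro cr_diff cr_mult cr_numeral cr_1 cu)
    then show ?thesis by simp
  qed
  define l where "l = (ya - 24) / (xa - 6)"
  define x3 where "x3 = l^2 - 8 - 6 - xa"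
  define y3 where "y3 = -(24 + l * (x3 - 6))"
  have E: "E1_add P0 (Pt xa ya) = Pt x3 y3"
    using E1_add_P0_chord[OF nx(1) l_def x3_def y3_def] .
  have xu: "xa = 1 / u" unfolding u_def by simp
  have yu: "ya = 1 / (u * t)" unfolding u_def t_def using x0 y0 by simp
  have lval: "l = (1 - 24 * u * t) / (t * (1 - 6 * u))"
    unfolding l_def xu yu using u0 t0 u6 by (simp add: field_simps)
  have l2: "l^2 = (1 - 24 * u * t)^2 * g / (u * (1 - 6 * u)^2)"
  proof -
    have "l^2 = (1 - 24 * u * t)^2 / (t^2 * (1 - 6 * u)^2)" unfolding lval by (simp add: power_divide power_mult_distrib)
    also have "\<dots> = (1 - 24 * u * t)^2 * g / (u * (1 - 6 * u)^2)"
      unfolding rel using t0 g0 u6 by (simp add: field_simps)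
    finally show ?thesis .
  qed
  have x3a: "x3 - 6 = ((1 - 24 * u * t)^2 * g - (1 + 20 * u) * (1 - 6 * u)^2) / (u * (1 - 6 * u)^2)"
    unfolding x3_def l2 xu using u0 u6 by (simp add: field_simps)
  have pid: "(1 - 24 * u * t)^2 * g - (1 + 20 * u) * (1 - 6 * u)^2
      = u * (-48 * t * g + 576 * u * t^2 * g + u * (216 - 720 * u))"
    unfolding g_def by (simp add: algebra_simps power2_eq_square)
  have h: "u * (216 - 720 * u) = t^2 * g * (216 - 720 * u)" using rel by simp
  have pid2: "(1 - 24 * u * t)^2 * g - (1 + 20 * u) * (1 - 6 * u)^2 = u * (t * K)"
  proof -
    have "u * (-48 * t * g + 576 * u * t^2 * g + u * (216 - 720 * u))
        = u * (-48 * t * g + 576 * u * t^2 * g + t^2 * g * (216 - 720 * u))" using h by simp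
    also have "\<dots> = u * (t * K)" unfolding K_def by (simp add: algebra_simps power2_eq_square)
    finally show ?thesis using pid by simp
  qed
  have x3v: "x3 = 6 + t * K / (1 - 6 * u)^2"
  proof -
    have "x3 - 6 = t * K / (1 - 6 * u)^2" unfolding x3a pid2 using u0 u6 by (simp add: field_simps)
    then show ?thesis by (simp add: algebra_simps)
  qed
  have y3v: "y3 = -(24 + (1 - 24 * u * t) * K / (1 - 6 * u)^3)"
  proof -
    have gen: "\<And>v a. v \<noteq> 0 \<Longrightarrow> (a / (t * v)) * (t * K / v^2) = a * K / v^3"
      using t0 by (simp add: field_simps power2_eq_square power3_eq_cube)
    have "l * (x3 - 6) = (1 - 24 * u * t) * K / (1 - 6 * u)^3"
      unfolding x3v lval using gen[OF u6] by simp
    then show ?thesis unfolding y3_def by simp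
  qed
  have crx: "cr q x3 6"
  proof -
    have "cr q (6 + t * K / (1 - 6 * u)^2) (6 + 0 * (-48))"
      by (intro cr_add cr_numeral cr_div1 cr_mult ct crK) (use cr_power[OF cr16, of 2] in simp)
    then show ?thesis unfolding x3v by simp
  qed
  have cry: "cr q y3 24"
  proof -
    have "cr q (-(24 + (1 - 24 * u * t) * K / (1 - 6 * u)^3)) (-(24 + (1 - 24 * 0 * 0) * (-48)))"
      by (intro cr_uminus cr_add cr_numeral cr_div1 cr_mult cr_diff cr_1 ct crK cu)
        (use cr_power[OF cr16, of 3] in simp)
    then show ?thesis unfolding y3v by simp
  qed
  have "intq q x3" using crx cr_intq by blast
  then have "red_q q (Pt x3 y3) = Pt (rat_red q x3) (rat_red q y3)" by (rule red_Pt_int)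
  also have "rat_red q x3 = r6" using cr_red[OF crx] cr_red[OF cr_numeral[of "num.Bit0 (num.Bit1 num.One)"]] unfolding r6_def by simp
  also have "rat_red q y3 = r24" using cr_red[OF cry] cr_red[OF cr_numeral[of "num.Bit0 (num.Bit0 (num.Bit0 (num.Bit1 num.One)))"]] unfolding r24_def by simp
  finally show ?thesis using E by simp
qed

end



context qctx begin

lemma r6_val: "r6 = 6 mod int q"
  using cr_red[OF cr_numeral[of "num.Bit0 (num.Bit1 num.One)"]] unfolding r6_def by simp
lemma r24_val: "r24 = 24 mod int q"
  using cr_red[OF cr_numeral[of "num.Bit0 (num.Bit0 (num.Bit0 (num.Bit1 num.One)))"]] unfolding r24_def by simp

lemma curve_intq: assumes c: "ya^2 = xa*(xa+2)*(xa+6)" and ix: "intq q xa" shows "intq q ya"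
proof -
  obtain a where "cr q xa a" using ix intq_iff by blast
  then have "cr q (xa*(xa+2)*(xa+6)) (a*(a+2)*(a+6))" by (intro cr_mult cr_add cr_numeral)
  then have "intq q (ya^2)" using c cr_intq by simp
  then show ?thesis by (rule sq_intq)
qed

lemma dvd48: "int q dvd x - 24 \<Longrightarrow> int q dvd x + 24 \<Longrightarrow> False"
proof -
  assume "int q dvd x - 24" "int q dvd x + 24"
  then have "int q dvd (x + 24) - (x - 24)" by (rule dvd_diff[rotated])
  then show False using q_ndvd_48 by simp
qed

lemma hom_aff:
  assumes c: "ya^2 = xa*(xa+2)*(xa+6)" and ix: "intq q xa"
  shows "red_q q (E1_add P0 (Pt xa ya)) = E1q_add q (Pt r6 r24) (Pt (rat_red q xa) (rat_red q ya))"
proof -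
  have iy: "intq q ya" using curve_intq c ix by blast
  define a where "a = rat_red q xa"
  define b where "b = rat_red q ya"
  have cra: "cr q xa a" unfolding a_def using ix intq_cr by blast
  have crb: "cr q ya b" unfolding b_def using iy intq_cr by blast
  have ar: "0 \<le> a" "a < int q" unfolding a_def using rat_red_range by auto
  have br: "0 \<le> b" "b < int q" unfolding b_def using rat_red_range by auto
  have a6: "a = r6 \<longleftrightarrow> int q dvd a - 6"
  proof -
    have "a = r6 \<longleftrightarrow> int q dvd a - r6" using range_eq ar r6_range by blast
    also have "\<dots> \<longleftrightarrow> int q dvd a - 6"
    proof
      assume "int q dvd a - r6" then show "int q dvd a - 6" using r6_cong dvd_add[of "int q" "a - r6" "r6 - 6"] by simp
    next
      assume "int q dvd a - 6" then show "int q dvd a - r6" using r6_cong dvd_diff[of "int q" "a - 6" "r6 - 6"] by simp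
    qed
    finally show ?thesis .
  qed
  have b24: "(r24 + b) mod int q = 0 \<longleftrightarrow> int q dvd b + 24"
  proof -
    have "(r24 + b) mod int q = 0 \<longleftrightarrow> int q dvd r24 + b" by (simp add: dvd_eq_mod_eq_0)
    also have "\<dots> \<longleftrightarrow> int q dvd b + 24"
    proof
      assume "int q dvd r24 + b" then show "int q dvd b + 24" using r24_cong dvd_diff[of "int q" "r24 + b" "r24 - 24"] by (simp add: algebra_simps)
    next
      assume "int q dvd b + 24" then show "int q dvd r24 + b" using r24_cong dvd_add[of "int q" "b + 24" "r24 - 24"] by (simp add: algebra_simps)
    qed
    finally show ?thesis .
  qed
  have redA: "red_q q (Pt xa ya) = Pt a b" unfolding a_def b_def using red_Pt_int ix by blast
  have chord: "red_q q (E1_add P0 (Pt xa ya)) = Pt ((L^2 - 8 - r6 - a) mod int q) ((- (r24 + L * ((L^2 - 8 - r6 - a) mod int q - r6))) mod int q)"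
    if xn: "xa \<noteq> 6" and crl: "cr q ((ya - 24) / (xa - 6)) L" for L
  proof -
    define l where "l = (ya - 24) / (xa - 6)"
    define x3 where "x3 = l^2 - 8 - 6 - xa"
    define y3 where "y3 = -(24 + l * (x3 - 6))"
    have E: "E1_add P0 (Pt xa ya) = Pt x3 y3" using E1_add_P0_chord[OF xn l_def x3_def y3_def] .
    have cl: "cr q l L" using crl unfolding l_def .
    have cx: "cr q x3 (L^2 - 8 - r6 - a)" unfolding x3_def by (intro cr_diff cr_power cl cr_numeral cr6 cra)
    then have cx': "cr q x3 ((L^2 - 8 - r6 - a) mod int q)" by (rule cr_mod)
    have cy: "cr q y3 (- (r24 + L * ((L^2 - 8 - r6 - a) mod int q - r6)))"
      unfolding y3_def by (intro cr_uminus cr_add cr_mult cr_diff cr24 cl cx' cr6)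
    have "intq q x3" using cx cr_intq by blast
    then show ?thesis using E red_Pt_int cr_red[OF cx] cr_red[OF cy] by simp
  qed
  consider (1) "\<not> int q dvd a - 6" | (2) "int q dvd a - 6" "int q dvd b + 24" | (3) "int q dvd a - 6" "\<not> int q dvd b + 24"
    by blast
  then have "red_q q (E1_add P0 (Pt xa ya)) = E1q_add q (Pt r6 r24) (Pt a b)"
  proof cases
    case 1
    have ar6: "a \<noteq> r6" using 1 a6 by simp
    have xn: "xa \<noteq> 6"
    proof
      assume "xa = 6" then have "cr q 6 a" using cra by simp
      then have "int q dvd a - 6" using cr_unique[OF _ cr_numeral] by blast
      then show False using 1 by simp
    qed
    define L where "L = ((b - r24) * inv_q q (a - r6)) mod int q"
    have nd: "\<not> int q dvd a - r6" using ar6 range_eq[OF ar(1,2) r6_range[THEN conjunct1] r6_range[THEN conjunct2]] by simp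
    have "cr q ((ya - 24) / (xa - 6)) ((b - r24) * inv_q q (a - r6))"
      by (intro cr_divide cr_diff crb cra cr24 cr6 nd)
    then have "cr q ((ya - 24) / (xa - 6)) L" unfolding L_def by (rule cr_mod)
    from chord[OF xn this] show ?thesis
      using Fq_chord[OF ar(1,2) ar6 L_def refl refl] by simp
  next
    case 2
    have ar6: "a = r6" using 2(1) a6 by simp
    have F: "E1q_add q (Pt r6 r24) (Pt a b) = Inf" by (rule Fq_inf[OF ar6]) (use 2(2) b24 in simp)
    have cx6: "cr q xa 6" using cr_cong[OF cra] 2 by simp
    have cyn: "cr q ya (-24)" using cr_cong[OF crb, of "-24"] 2 by simp
    have y24: "ya \<noteq> 24"
    proof
      assume "ya = 24" then have "cr q 24 (-24)" using cyn by simp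
      then have "int q dvd (-24) - 24" using cr_unique[OF _ cr_numeral] by blast
      then show False using q_ndvd_48 by simp
    qed
    show ?thesis
    proof (cases "xa = 6")
      case True
      then have "ya^2 = 24^2" using c by simp
      then have "(ya - 24) * (ya + 24) = 0" by (simp add: algebra_simps power2_eq_square)
      then have "ya = -24" using y24 by (simp add: eq_neg_iff_add_eq_0)
      then show ?thesis using True F by (simp add: P0_def red_q_def)
    next
      case False
      define l where "l = (ya - 24) / (xa - 6)"
      define x3 where "x3 = l^2 - 8 - 6 - xa"
      define y3 where "y3 = -(24 + l * (x3 - 6))"
      have E: "E1_add P0 (Pt xa ya) = Pt x3 y3" using E1_add_P0_chord[OF False l_def x3_def y3_def] .
      define s where "s = (xa - 6) / (ya - 24)"
      have ls: "l * s = 1" unfolding l_def s_def using False y24 by simp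
      have cs: "cr q s 0"
      proof -
        have "cr q (xa - 6) (6 - 6)" by (intro cr_diff cx6 cr_numeral)
        moreover have "cr q (ya - 24) (-24 - 24)" by (intro cr_diff cyn cr_numeral)
        ultimately have "cr q (xa - 6) 0" "cr q (ya - 24) (-48)" by simp_all
        then have "cr q s (0 * inv_q q (-48))" unfolding s_def
          using q_ndvd_48 by (intro cr_divide) simp_all
        then show ?thesis by simp
      qed
      have cs2: "cr q (s^2) 0" using cr_power[OF cs, of 2] by simp
      have "x3 * s^2 = (l * s)^2 - (14 + xa) * s^2" unfolding x3_def by (simp add: algebra_simps power2_eq_square)
      also have "\<dots> = 1 - (14 + xa) * s^2" using ls by simp
      finally have xs: "x3 * s^2 = 1 - (14 + xa) * s^2" .
      have "cr q (1 - (14 + xa) * s^2) (1 - (14 + a) * 0)" by (intro cr_diff cr_mult cr_add cr_1 cr_numeral cra cs2)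
      then have "cr q (x3 * s^2) 1" using xs by simp
      then have "\<not> intq q x3" using not_intq[OF cs2] q3 by (simp add: zdvd1_eq)
      then show ?thesis using E F red_Pt_nonint redA by simp
    qed
  next
    case 3
    have ar6: "a = r6" using 3(1) a6 by simp
    have nb: "(r24 + b) mod int q \<noteq> 0" using 3(2) b24 by simp
    define L where "L = ((3 * r6^2 + 16 * r6 + 12) * inv_q q (2 * r24)) mod int q"
    have F: "E1q_add q (Pt r6 r24) (Pt a b) = Pt ((L^2 - 8 - r6 - a) mod int q) ((- (r24 + L * ((L^2 - 8 - r6 - a) mod int q - r6))) mod int q)"
      using Fq_tan[OF ar6 nb L_def refl refl] .
    have cx6: "cr q xa 6" using cr_cong[OF cra] 3 by simp
    have "cr q (xa*(xa+2)*(xa+6)) (6*(6+2)*(6+6))" by (intro cr_mult cr_add cr_numeral cx6)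
    then have "cr q (ya^2) 576" using c by simp
    then have "int q dvd b^2 - 576" using cr_unique cr_power[OF crb] by blast
    then have "int q dvd (b - 24) * (b + 24)" by (simp add: algebra_simps power2_eq_square)
    then have "int q dvd b - 24" using 3 qip prime_dvd_mult_iff by blast
    then have cy24: "cr q ya 24" using cr_cong[OF crb] by simp
    have yn: "ya \<noteq> -24"
    proof
      assume "ya = -24"
      then have "cr q (-24) 24" using cy24 by simp
      moreover have "cr q (-24) (-24)" using cr_uminus[OF cr_numeral] by simp
      ultimately have "int q dvd 24 - (-24)" using cr_unique by blast
      then show False using q_ndvd_48 by simp
    qed
    have n2: "\<not> int q dvd 2 * r24"
    proof
      assume h: "int q dvd 2 * r24"
      have "int q dvd 2 * (r24 - 24)" using r24_cong by (rule dvd_mult)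
      then have "int q dvd 2 * r24 - 2 * (r24 - 24)" using h by (rule dvd_diff[rotated]) 
      then show False using q_ndvd_48 by simp
    qed
    have cL0: "cr q ((3 * 6^2 + 16 * 6 + 12) / (2 * 24)) ((3 * r6^2 + 16 * r6 + 12) * inv_q q (2 * r24))"
      by (intro cr_divide cr_add cr_mult cr_power cr_numeral cr6 cr24 n2)
    have crl: "cr q ((ya - 24) / (xa - 6)) L" if xn: "xa \<noteq> 6"
    proof -
      have "(ya - 24) * (ya + 24) = (xa - 6) * (xa^2 + 14 * xa + 96)"
        using c by (simp add: algebra_simps power2_eq_square)
      moreover have "xa - 6 \<noteq> 0" "ya + 24 \<noteq> 0" using xn yn by (simp_all add: add_eq_0_iff)
      ultimately have le: "(ya - 24) / (xa - 6) = (xa^2 + 14 * xa + 96) / (ya + 24)"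
        by (simp add: frac_eq_eq)
      have n48: "\<not> int q dvd 24 + 24" using q_ndvd_48 by simp
      have "cr q ((xa^2 + 14 * xa + 96) / (ya + 24)) ((6^2 + 14 * 6 + 96) * inv_q q (24 + 24))"
        by (intro cr_divide cr_add cr_mult cr_power cr_numeral cx6 cy24 n48)
      moreover have "cr q ((3 * 6^2 + 16 * 6 + 12) / (2 * 24)) ((6^2 + 14 * 6 + 96) * inv_q q (24 + 24))"
      proof -
        have "cr q ((6^2 + 14 * 6 + 96) / (24 + 24)) ((6^2 + 14 * 6 + 96) * inv_q q (24 + 24))"
          by (intro cr_divide cr_add cr_mult cr_power cr_numeral n48)
        moreover have "(6^2 + 14 * 6 + 96) / (24 + 24) = ((3 * 6^2 + 16 * 6 + 12) / (2 * 24) :: rat)" by simp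
        ultimately show ?thesis by simp
      qed
      ultimately have "int q dvd ((3 * r6^2 + 16 * r6 + 12) * inv_q q (2 * r24)) - ((6^2 + 14 * 6 + 96) * inv_q q (24 + 24))"
        using cr_unique cL0 by blast
      then have "int q dvd ((6^2 + 14 * 6 + 96) * inv_q q (24 + 24)) - ((3 * r6^2 + 16 * r6 + 12) * inv_q q (2 * r24))"
        by (subst dvd_minus_iff[symmetric]) (simp only: minus_diff_eq)
      with \<open>cr q ((xa^2 + 14 * xa + 96) / (ya + 24)) _\<close> have "cr q ((xa^2 + 14 * xa + 96) / (ya + 24)) ((3 * r6^2 + 16 * r6 + 12) * inv_q q (2 * r24))"
        by (rule cr_cong)
      then show ?thesis unfolding le L_def by (rule cr_mod)
    qed
    show ?thesis
    proof (cases "xa = 6")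
      case False
      from chord[OF False crl[OF False]] show ?thesis
        using F by simp
    next
      case True
      then have "ya^2 = 24^2" using c by simp
      then have "(ya - 24) * (ya + 24) = 0" by (simp add: algebra_simps power2_eq_square)
      then have y: "ya = 24" using yn by (simp add: eq_neg_iff_add_eq_0)
      define l where "l = (3 * 6^2 + 16 * 6 + 12) / (2 * 24 :: rat)"
      define x3 where "x3 = l^2 - 8 - 6 - 6"
      define y3 where "y3 = -(24 + l * (x3 - 6))"
      have E: "E1_add P0 (Pt xa ya) = Pt x3 y3" unfolding True y P0_def l_def x3_def y3_def
        by (simp add: Let_def)
      have cl: "cr q l L" unfolding l_def L_def by (rule cr_mod[OF cL0])
      have cx: "cr q x3 (L^2 - 8 - r6 - a)" unfolding x3_def using cra True
        by (intro cr_diff cr_power cl cr_numeral cr6) simp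
      then have cx': "cr q x3 ((L^2 - 8 - r6 - a) mod int q)" by (rule cr_mod)
      have cy: "cr q y3 (- (r24 + L * ((L^2 - 8 - r6 - a) mod int q - r6)))"
        unfolding y3_def by (intro cr_uminus cr_add cr_mult cr_diff cr24 cl cx' cr6)
      have "intq q x3" using cx cr_intq by blast
      then show ?thesis using E F redA red_Pt_int cr_red[OF cx] cr_red[OF cy] by simp
    qed
  qed
  then show ?thesis by (simp add: a_def b_def)
qed

end



definition negq :: "nat \<Rightarrow> int ecpt \<Rightarrow> int ecpt" where
  "negq q R = (case R of Inf \<Rightarrow> Inf | Pt x y \<Rightarrow> Pt x ((- y) mod int q))"

context qctx begin

lemma hom: assumes "on_E1 A" shows "red_q q (E1_add P0 A) = E1q_add q (red_q q P0) (red_q q A)"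
proof (cases A)
  case Inf
  have "E1_add P0 Inf = P0" by (simp add: P0_def)
  then show ?thesis using Inf red_P0 by (simp add: red_q_def[of q Inf])
next
  case (Pt xa ya)
  have c: "ya^2 = xa*(xa+2)*(xa+6)" using assms Pt by (simp add: on_E1_def)
  show ?thesis
  proof (cases "intq q xa")
    case True
    then show ?thesis using hom_aff[OF c True] Pt red_P0 red_Pt_int by simp
  next
    case False
    then show ?thesis using kernel[OF c False] Pt red_P0 red_Pt_nonint
      by (simp add: Fq_inf)
  qed
qed

lemma red_neg: assumes "on_E1 A" shows "red_q q (E1_neg A) = negq q (red_q q A)"
proof (cases A)
  case Inf then show ?thesis by (simp add: E1_neg_def negq_def red_q_def)
next
  case (Pt xa ya)
  have c: "ya^2 = xa*(xa+2)*(xa+6)" using assms Pt by (simp add: on_E1_def)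
  show ?thesis
  proof (cases "intq q xa")
    case True
    have iy: "intq q ya" using curve_intq c True by blast
    have "rat_red q (- ya) = (- rat_red q ya) mod int q"
      using cr_red[OF cr_uminus[OF intq_cr[OF iy]]] .
    then show ?thesis using Pt True red_Pt_int by (simp add: E1_neg_def negq_def)
  next
    case False
    then show ?thesis using Pt red_Pt_nonint by (simp add: E1_neg_def negq_def)
  qed
qed

lemma negq_negq: "negq q (negq q (red_q q A)) = red_q q A"
proof (cases "red_q q A")
  case Inf then show ?thesis by (simp add: negq_def)
next
  case (Pt x y)
  have "y = rat_red q (case A of Pt x y \<Rightarrow> y)"
    using Pt unfolding red_q_def by (auto split: ecpt.splits if_splits)
  then have "0 \<le> y" "y < int q" using rat_red_range by auto
  then have "(- ((- y) mod int q)) mod int q = y"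
    by (metis add.inverse_inverse mod_minus_eq mod_pos_pos_trivial)
  then show ?thesis using Pt by (simp add: negq_def)
qed

lemma red_inj:
  assumes "on_E1 A" "on_E1 B" "red_q q (E1_add P0 A) = red_q q (E1_add P0 B)"
  shows "red_q q A = red_q q B"
proof -
  have "red_q q (E1_neg A) = red_q q (E1_add P0 (E1_neg (E1_add P0 A)))"
    using third_Q[OF assms(1)] by simp
  also have "\<dots> = E1q_add q (red_q q P0) (negq q (red_q q (E1_add P0 A)))"
    using hom red_neg E1_neg_on E1_add_on P0_on assms(1) by simp
  also have "\<dots> = E1q_add q (red_q q P0) (negq q (red_q q (E1_add P0 B)))"
    using assms(3) by simp
  also have "\<dots> = red_q q (E1_add P0 (E1_neg (E1_add P0 B)))"
    using hom red_neg E1_neg_on E1_add_on P0_on assms(2) by simp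
  also have "\<dots> = red_q q (E1_neg B)" using third_Q[OF assms(2)] by simp
  finally have "negq q (red_q q A) = negq q (red_q q B)"
    using red_neg assms(1,2) by simp
  then show ?thesis using negq_negq by metis
qed

abbreviation "Rq \<equiv> red_q q P0"
abbreviation "Rp n \<equiv> (E1q_add q Rq ^^ n) Inf"
abbreviation "Mul n \<equiv> (E1_add P0 ^^ n) Inf"

lemma red_Mul: "red_q q (Mul n) = Rp n"
proof (induction n)
  case 0 then show ?case by (simp add: red_q_def)
next
  case (Suc n)
  then show ?case using hom[OF iter_on[of n]] by simp
qed

lemma red_range: "red_q q A \<in> insert Inf ((\<lambda>(x, y). Pt x y) ` ({0..<int q} \<times> {0..<int q}))"
proof (cases "red_q q A")
  case Inf then show ?thesis by simp
next
  case (Pt x y)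
  then have "x = rat_red q (case A of Pt x y \<Rightarrow> x) \<and> y = rat_red q (case A of Pt x y \<Rightarrow> y)"
    unfolding red_q_def by (auto split: ecpt.splits if_splits)
  then have "x \<in> {0..<int q}" "y \<in> {0..<int q}" using rat_red_range by auto
  then show ?thesis using Pt by auto
qed

lemma exists_order: "\<exists>n. 0 < n \<and> Rp n = Inf"
proof -
  define S where "S = insert Inf ((\<lambda>(x, y). Pt x y) ` ({0..<int q} \<times> {0..<int q}))"
  have fS: "finite S" unfolding S_def by simp
  have sub: "Rp ` {0..card S} \<subseteq> S" using red_range red_Mul unfolding S_def by (metis image_subsetI)
  have "\<not> inj_on Rp {0..card S}"
  proof
    assume "inj_on Rp {0..card S}"
    then have "card {0..card S} \<le> card S" using card_inj_on_le[OF _ sub fS] by blast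
    then show False by simp
  qed
  then obtain i j where ij: "i \<in> {0..card S}" "j \<in> {0..card S}" "i \<noteq> j" "Rp i = Rp j"
    unfolding inj_on_def by blast
  obtain a b where ab: "a < b" "Rp a = Rp b"
  proof (cases "i < j")
    case True then show ?thesis using that ij by blast
  next
    case False then have "j < i" using ij(3) by simp
    then show ?thesis using that ij(4) by metis
  qed
  have "\<forall>k \<le> a. Rp (a - k) = Rp (b - k)"
  proof (intro allI impI)
    fix k assume "k \<le> a"
    then show "Rp (a - k) = Rp (b - k)"
    proof (induction k)
      case 0 then show ?case using ab by simp
    next
      case (Suc k)
      then have IH: "Rp (a - k) = Rp (b - k)" by simp
      have ea: "a - k = Suc (a - Suc k)" using Suc.prems by simp
      have eb: "b - k = Suc (b - Suc k)" using Suc.prems ab by simp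
      have "red_q q (E1_add P0 (Mul (a - Suc k))) = red_q q (E1_add P0 (Mul (b - Suc k)))"
        using IH red_Mul[of "a - k"] red_Mul[of "b - k"] unfolding ea eb by simp
      then have "red_q q (Mul (a - Suc k)) = red_q q (Mul (b - Suc k))"
        using red_inj iter_on by blast
      then show ?case using red_Mul by simp
    qed
  qed
  then have "Rp 0 = Rp (b - a)" by (metis diff_self_eq_0 order_refl)
  then show ?thesis using ab by (intro exI[of _ "b - a"]) simp
qed

definition "Oq = E1q_order q Rq"

lemma Oq_prop: "0 < Oq \<and> Rp Oq = Inf"
  unfolding Oq_def E1q_order_def using LeastI_ex[OF exists_order] by simp

lemma Rp_add_Oq: "Rp (n + Oq) = Rp n"
  using Oq_prop by (simp add: funpow_add)

lemma Rp_mod: "Rp n = Rp (n mod Oq)"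
proof (induction n rule: less_induct)
  case (less n)
  show ?case
  proof (cases "n < Oq")
    case True then show ?thesis by simp
  next
    case False
    then have "n = (n - Oq) + Oq" by simp
    then have "Rp n = Rp (n - Oq)" using Rp_add_Oq by metis
    also have "\<dots> = Rp ((n - Oq) mod Oq)" using less Oq_prop False by simp
    also have "(n - Oq) mod Oq = n mod Oq" using False by (simp add: mod_if)
    finally show ?thesis .
  qed
qed

lemma neg_Mul: "j \<le> Oq \<Longrightarrow> red_q q (E1_neg (Mul j)) = red_q q (Mul (Oq - j))"
proof (induction j)
  case 0 then show ?case using Oq_prop red_Mul[of Oq] by (simp add: E1_neg_def red_q_def)
next
  case (Suc j)
  then have IH: "red_q q (E1_neg (Mul j)) = red_q q (Mul (Oq - j))" by simp
  define C where "C = Mul (Oq - Suc j)"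
  define B where "B = Mul j"
  have onC: "on_E1 C" "on_E1 B" unfolding C_def B_def using iter_on by auto
  have e: "Oq - j = Suc (Oq - Suc j)" using Suc.prems by simp
  have IH': "red_q q (E1_neg B) = red_q q (E1_add P0 C)" using IH unfolding e B_def C_def by simp
  have "red_q q (E1_neg C) = red_q q (E1_add P0 (E1_neg (E1_add P0 C)))"
    using third_Q[OF onC(1)] by simp
  also have "\<dots> = E1q_add q Rq (negq q (red_q q (E1_add P0 C)))"
    using hom red_neg E1_neg_on E1_add_on P0_on onC by simp
  also have "\<dots> = E1q_add q Rq (negq q (negq q (red_q q B)))"
    using IH' red_neg onC by simp
  also have "\<dots> = red_q q (E1_add P0 B)" using negq_negq hom onC by simp
  finally have "red_q q (E1_neg C) = red_q q (E1_add P0 B)" .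
  then have "negq q (red_q q C) = red_q q (E1_add P0 B)" using red_neg onC by simp
  then have "red_q q C = negq q (red_q q (E1_add P0 B))" using negq_negq by metis
  also have "\<dots> = red_q q (E1_neg (E1_add P0 B))" using red_neg E1_add_on P0_on onC by simp
  finally show ?case unfolding B_def C_def by simp
qed

lemma red_mul: "red_q q (E1_mul k P0) = Rp (nat (k mod int Oq))"
proof (cases "0 \<le> k")
  case True
  have "red_q q (E1_mul k P0) = Rp (nat k)" using True red_Mul by (simp add: E1_mul_def)
  also have "\<dots> = Rp (nat k mod Oq)" by (rule Rp_mod)
  also have "nat k mod Oq = nat (k mod int Oq)" using True by (simp add: nat_mod_distrib)
  finally show ?thesis .
next
  case False
  define j where "j = nat (- k)"
  define j' where "j' = j mod Oq"
  have j'le: "j' \<le> Oq" unfolding j'_def using Oq_prop by (simp add: less_imp_le)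
  have "red_q q (E1_mul k P0) = negq q (red_q q (Mul j))"
    using False red_neg iter_on by (simp add: E1_mul_def j_def)
  also have "\<dots> = negq q (Rp j')" using red_Mul Rp_mod unfolding j'_def by simp
  also have "\<dots> = negq q (red_q q (Mul j'))" using red_Mul by simp
  also have "\<dots> = red_q q (E1_neg (Mul j'))" using red_neg iter_on by simp
  also have "\<dots> = red_q q (Mul (Oq - j'))" using neg_Mul j'le by simp
  also have "\<dots> = Rp ((Oq - j') mod Oq)" using red_Mul Rp_mod by simp
  also have "(Oq - j') mod Oq = nat (k mod int Oq)"
  proof -
    have "int ((Oq - j') mod Oq) = (int Oq - int j') mod int Oq"
      using j'le by (simp add: zmod_int of_nat_diff)
    also have "\<dots> = (- int j') mod int Oq" by (simp add: mod_diff_left_eq[symmetric])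
    also have "int j' = (- k) mod int Oq" unfolding j'_def j_def using False by (simp add: zmod_int)
    also have "(- ((- k) mod int Oq)) mod int Oq = k mod int Oq"
      by (metis add.inverse_inverse mod_minus_eq)
    finally show ?thesis by simp
  qed
  finally show ?thesis .
qed

end



context qctx begin

abbreviation "SD D \<equiv> phi_q q ` CD_Fq q D"

lemma cong_sq_neg: "[((- x) mod int q)^2 = x^2] (mod int q)"
proof -
  have "[((- x) mod int q) = - x] (mod int q)" by (simp add: cong_def)
  then have "[((- x) mod int q)^2 = (- x)^2] (mod int q)" by (rule cong_pow)
  then show ?thesis by simp
qed

lemma negq_S: assumes "X \<in> SD D" shows "negq q X \<in> SD D"
proof -
  obtain x0 x1 x2 x3 x4 where mem: "(x0, x1, x2, x3, x4) \<in> CD_Fq q D" and X: "X = phi_q q (x0, x1, x2, x3, x4)"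
    using assms by auto
  show ?thesis
  proof (cases "x4 mod int q = 0")
    case True
    then have "X = Inf" using X by (simp add: phi_q_def)
    then show ?thesis using assms by (simp add: negq_def)
  next
    case False
    define y0 where "y0 = (- x0) mod int q"
    have c0: "[y0^2 = x0^2] (mod int q)" unfolding y0_def by (rule cong_sq_neg)
    have m: "x0 \<in> {0..<int q}" "x1 \<in> {0..<int q}" "x2 \<in> {0..<int q}" "x3 \<in> {0..<int q}" "x4 \<in> {0..<int q}"
      "(x0^2 - 2 * x1^2 + x2^2) mod int q = 0"
      "(x1^2 - 2 * x2^2 + D * x3^2) mod int q = 0"
      "(x2^2 - 2 * D * x3^2 + x4^2) mod int q = 0"
      using mem unfolding CD_Fq_def by auto
    have e1: "[y0^2 - 2 * x1^2 + x2^2 = x0^2 - 2 * x1^2 + x2^2] (mod int q)"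
      by (intro cong_add cong_diff cong_refl c0)
    have "y0 \<in> {0..<int q}" unfolding y0_def using q_pos by simp
    moreover have "(x4 \<noteq> 0)" using False by auto
    ultimately have mem': "(y0, x1, x2, x3, x4) \<in> CD_Fq q D"
      using m e1 unfolding CD_Fq_def cong_def by auto
    have p1: "(6 * y0^2 * inv_q q (x4^2)) mod int q = (6 * x0^2 * inv_q q (x4^2)) mod int q"
    proof -
      have "[6 * y0^2 * inv_q q (x4^2) = 6 * x0^2 * inv_q q (x4^2)] (mod int q)"
        by (intro cong_mult cong_refl c0)
      then show ?thesis by (simp add: cong_def)
    qed
    have p2: "(24 * y0 * x1 * x2 * inv_q q (x4^3)) mod int q = (- ((24 * x0 * x1 * x2 * inv_q q (x4^3)) mod int q)) mod int q"
    proof -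
      have "[y0 = - x0] (mod int q)" unfolding y0_def by (simp add: cong_def)
      then have "[24 * y0 * x1 * x2 * inv_q q (x4^3) = 24 * (- x0) * x1 * x2 * inv_q q (x4^3)] (mod int q)"
        by (intro cong_mult cong_refl)
      then have "(24 * y0 * x1 * x2 * inv_q q (x4^3)) mod int q = (- (24 * x0 * x1 * x2 * inv_q q (x4^3))) mod int q"
        by (simp add: cong_def)
      also have "\<dots> = (- ((24 * x0 * x1 * x2 * inv_q q (x4^3)) mod int q)) mod int q"
        by (simp add: mod_minus_eq)
      finally show ?thesis .
    qed
    have "phi_q q (y0, x1, x2, x3, x4) = negq q X"
      using X False p1 p2 by (simp add: phi_q_def negq_def)
    then show ?thesis using mem' by (metis image_eqI)
  qed
qed

lemma S_sub:
  assumes v: "[D' * v^2 = D] (mod int q)" "\<not> int q dvd v"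
  shows "SD D \<subseteq> SD D'"
proof
  fix X assume "X \<in> SD D"
  then obtain x0 x1 x2 x3 x4 where mem: "(x0, x1, x2, x3, x4) \<in> CD_Fq q D" and X: "X = phi_q q (x0, x1, x2, x3, x4)"
    by auto
  have m: "x0 \<in> {0..<int q}" "x1 \<in> {0..<int q}" "x2 \<in> {0..<int q}" "x3 \<in> {0..<int q}" "x4 \<in> {0..<int q}"
    "(x0, x1, x2, x3, x4) \<noteq> (0, 0, 0, 0, 0)"
    "(x0^2 - 2 * x1^2 + x2^2) mod int q = 0"
    "(x1^2 - 2 * x2^2 + D * x3^2) mod int q = 0"
    "(x2^2 - 2 * D * x3^2 + x4^2) mod int q = 0"
    using mem unfolding CD_Fq_def by auto
  define w where "w = (v * x3) mod int q"
  have cw: "[D' * w^2 = D * x3^2] (mod int q)"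
  proof -
    have "[w = v * x3] (mod int q)" unfolding w_def by (simp add: cong_def)
    then have "[D' * w^2 = D' * (v * x3)^2] (mod int q)" by (intro cong_mult cong_pow cong_refl)
    moreover have "D' * (v * x3)^2 = (D' * v^2) * x3^2" by (simp add: algebra_simps power2_eq_square)
    moreover have "[(D' * v^2) * x3^2 = D * x3^2] (mod int q)" by (intro cong_mult cong_refl v(1))
    ultimately show ?thesis using cong_trans by metis
  qed
  have e2: "[x1^2 - 2 * x2^2 + D' * w^2 = x1^2 - 2 * x2^2 + D * x3^2] (mod int q)"
    by (intro cong_add cong_refl cw)
  have e3: "[x2^2 - 2 * D' * w^2 + x4^2 = x2^2 - 2 * D * x3^2 + x4^2] (mod int q)"
  proof -
    have "[2 * (D' * w^2) = 2 * (D * x3^2)] (mod int q)" by (intro cong_mult cong_refl cw)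
    then have "[x2^2 - 2 * (D' * w^2) + x4^2 = x2^2 - 2 * (D * x3^2) + x4^2] (mod int q)"
      by (intro cong_add cong_diff cong_refl)
    then show ?thesis by (simp add: mult.assoc)
  qed
  have wr: "w \<in> {0..<int q}" unfolding w_def using q_pos by simp
  have nz: "(x0, x1, x2, w, x4) \<noteq> (0, 0, 0, 0, 0)"
  proof
    assume h: "(x0, x1, x2, w, x4) = (0, 0, 0, 0, 0)"
    then have "int q dvd v * x3" unfolding w_def by (simp add: dvd_eq_mod_eq_0)
    then have "int q dvd x3" using v(2) qip prime_dvd_mult_iff by blast
    then have "x3 = 0" using m(4) by (metis atLeastLessThan_iff dvd_imp_le_int mod_pos_pos_trivial dvd_eq_mod_eq_0)
    then show False using h m(6) by simp
  qed
  have mem': "(x0, x1, x2, w, x4) \<in> CD_Fq q D'"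
    using m wr nz e2 e3 unfolding CD_Fq_def cong_def by auto
  have "phi_q q (x0, x1, x2, w, x4) = X" using X by (simp add: phi_q_def)
  then show "X \<in> SD D'" using mem' by (metis image_eqI)
qed

lemma Legendre_vals: "\<not> int q dvd D \<Longrightarrow> Legendre D (int q) = 1 \<or> Legendre D (int q) = -1"
  unfolding Legendre_def by (auto simp: cong_0_iff)

lemma exists_v:
  assumes "\<not> int q dvd D" "\<not> int q dvd D'" "Legendre D (int q) = Legendre D' (int q)"
  shows "\<exists>v. [D' * v^2 = D] (mod int q) \<and> \<not> int q dvd v"
proof -
  define h where "h = (q - 1) div 2"
  have q2: "2 < q" using q3 by simp
  have E1: "[Legendre D (int q) = D ^ h] (mod int q)" unfolding h_def using euler_criterion[OF qp q2] .
  have E2: "[Legendre D' (int q) = D' ^ h] (mod int q)" unfolding h_def using euler_criterion[OF qp q2] .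
  have E3: "[Legendre (D * D') (int q) = (D * D') ^ h] (mod int q)" unfolding h_def using euler_criterion[OF qp q2] .
  have "[Legendre D (int q) * Legendre D' (int q) = D ^ h * D' ^ h] (mod int q)" using E1 E2 by (rule cong_mult)
  moreover have "Legendre D (int q) * Legendre D' (int q) = 1"
    using Legendre_vals[OF assms(1)] assms(3) by auto
  ultimately have "[Legendre (D * D') (int q) = 1] (mod int q)"
    using E3 by (metis cong_sym cong_trans power_mult_distrib)
  moreover have nDD: "\<not> int q dvd D * D'" using q_ndvd_mult assms(1,2) by blast
  ultimately have L1: "Legendre (D * D') (int q) = 1"
  proof -
    assume c: "[Legendre (D * D') (int q) = 1] (mod int q)"
    have "Legendre (D * D') (int q) = 1 \<or> Legendre (D * D') (int q) = -1" using Legendre_vals nDD by blast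
    moreover have "Legendre (D * D') (int q) \<noteq> -1"
    proof
      assume "Legendre (D * D') (int q) = -1"
      then have "int q dvd 1 - (-1)" using c by (simp add: cong_iff_dvd_diff dvd_diff_commute)
      then show False using q_ndvd_2 by simp
    qed
    ultimately show ?thesis by blast
  qed
  then have "QuadRes (int q) (D * D')" unfolding Legendre_def by (auto split: if_splits)
  then obtain c where cc: "[c^2 = D * D'] (mod int q)" unfolding QuadRes_def by blast
  define I where "I = inv_q q D'"
  have DI: "[D' * I = 1] (mod int q)" unfolding I_def using inv_q_prop[OF qp q3 assms(2)]
    by (simp add: cong_iff_dvd_diff)
  define v where "v = c * I"
  have "D' * v^2 = c^2 * (D' * I) * I" unfolding v_def by (simp add: algebra_simps power2_eq_square)
  moreover have "[c^2 * (D' * I) * I = (D * D') * 1 * I] (mod int q)" by (intro cong_mult cc DI cong_refl)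
  moreover have "(D * D') * 1 * I = D * (D' * I)" by (simp add: algebra_simps)
  moreover have "[D * (D' * I) = D * 1] (mod int q)" by (intro cong_mult cong_refl DI)
  ultimately have cv: "[D' * v^2 = D] (mod int q)" by (metis cong_trans mult_1_right)
  have "\<not> int q dvd v"
  proof
    assume "int q dvd v"
    then have "int q dvd D' * v^2" by (simp add: power2_eq_square)
    then have "int q dvd D" using cv by (metis cong_dvd_iff)
    then show False using assms(1) by simp
  qed
  then show ?thesis using cv by blast
qed

lemma S_eq:
  assumes "\<not> int q dvd D" "\<not> int q dvd D'" "Legendre D (int q) = Legendre D' (int q)"
  shows "SD D = SD D'"
  using exists_v[OF assms] exists_v[OF assms(2,1) assms(3)[symmetric]] S_sub by (metis subset_antisym)

lemma Rq_S: assumes "\<not> int q dvd D" "Legendre D (int q) = 1" shows "Rq \<in> SD D"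
proof -
  have "QuadRes (int q) D" using assms unfolding Legendre_def by (auto split: if_splits)
  then obtain y where y: "[y^2 = D] (mod int q)" unfolding QuadRes_def by blast
  have ny: "\<not> int q dvd y"
  proof
    assume "int q dvd y" then have "int q dvd y^2" by (simp add: power2_eq_square)
    then have "int q dvd D" using y by (metis cong_dvd_iff)
    then show False using assms(1) by simp
  qed
  define w where "w = inv_q q y"
  have yw: "[y * w = 1] (mod int q)" unfolding w_def using inv_q_prop[OF qp q3 ny] by (simp add: cong_iff_dvd_diff)
  have Dw: "[D * w^2 = 1] (mod int q)"
  proof -
    have "[y^2 * w^2 = D * w^2] (mod int q)" by (intro cong_mult cong_refl y)
    moreover have "y^2 * w^2 = (y * w) * (y * w)" by (simp add: algebra_simps power2_eq_square)
    moreover have "[(y * w) * (y * w) = 1 * 1] (mod int q)" by (intro cong_mult yw)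
    ultimately show ?thesis by (metis cong_sym cong_trans mult_1_right)
  qed
  have q1: "1 < int q" using q3 by simp
  have wr: "w \<in> {0..<int q}" unfolding w_def inv_q_def using q_pos by simp
  have e2: "(1^2 - 2 * 1^2 + D * w^2) mod int q = 0"
  proof -
    have "[1^2 - 2 * 1^2 + D * w^2 = 1^2 - 2 * 1^2 + 1] (mod int q)" by (intro cong_add cong_refl Dw)
    then show ?thesis by (simp add: cong_def)
  qed
  have e3: "(1^2 - 2 * D * w^2 + 1^2) mod int q = 0"
  proof -
    have "[1^2 - 2 * (D * w^2) + 1^2 = 1^2 - 2 * 1 + 1^2] (mod int q)" by (intro cong_add cong_diff cong_mult cong_refl Dw)
    then show ?thesis by (simp add: cong_def mult.assoc)
  qed
  have mem: "(1, 1, 1, w, 1) \<in> CD_Fq q D" unfolding CD_Fq_def using q1 wr e2 e3 by simp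
  have "phi_q q (1, 1, 1, w, 1) = Pt (6 mod int q) (24 mod int q)"
    using q1 inv_q_1 by (simp add: phi_q_def)
  also have "\<dots> = Rq" using red_P0 r6_val r24_val by simp
  finally show ?thesis using mem by (metis image_eqI)
qed

end



theorem proposition6p4:
  fixes q :: nat
  assumes "prime q" and "q > 3"
  shows "(\<forall>D D'. squarefree D \<and> \<not> int q dvd D \<and> squarefree D' \<and> \<not> int q dvd D'
            \<and> Legendre D (int q) = Legendre D' (int q) \<longrightarrow> H_Dq D q = H_Dq D' q)
    \<and> (let Oq = E1q_order q (red_q q P0) in
       \<exists>M :: int \<Rightarrow> int set.
          M 1 \<subseteq> {0..<int Oq} \<and> M (-1) \<subseteq> {0..<int Oq}
        \<and> (\<forall>D. squarefree D \<and> \<not> int q dvd D \<longrightarrow>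
              H_Dq D q = {E1_mul k P0 | k. odd k \<and>
                            (\<exists>m \<in> M (Legendre D (int q)). [k = m] (mod int Oq))})
        \<and> 1 mod int Oq \<in> M 1
        \<and> (\<forall>\<epsilon> \<in> {1, -1}. \<forall>k \<in> M \<epsilon>. (- k) mod int Oq \<in> M \<epsilon>))"
proof -
  interpret qctx q using assms by unfold_locales
  have part1: "\<forall>D D'. squarefree D \<and> \<not> int q dvd D \<and> squarefree D' \<and> \<not> int q dvd D'
            \<and> Legendre D (int q) = Legendre D' (int q) \<longrightarrow> H_Dq D q = H_Dq D' q"
  proof (intro allI impI)
    fix D D' assume h: "squarefree D \<and> \<not> int q dvd D \<and> squarefree D' \<and> \<not> int q dvd D'
            \<and> Legendre D (int q) = Legendre D' (int q)"
    then have "SD D = SD D'" using S_eq by blast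
    then show "H_Dq D q = H_Dq D' q" unfolding H_Dq_def by simp
  qed
  define M where "M = (\<lambda>\<epsilon>::int. {m \<in> {0..<int Oq}. \<forall>D. squarefree D \<and> \<not> int q dvd D \<and> Legendre D (int q) = \<epsilon>
                        \<longrightarrow> Rp (nat m) \<in> SD D})"
  have Opos: "0 < Oq" using Oq_prop by simp
  have Oeq: "E1q_order q (red_q q P0) = Oq" unfolding Oq_def by simp
  have A1: "M 1 \<subseteq> {0..<int Oq} \<and> M (-1) \<subseteq> {0..<int Oq}" unfolding M_def by auto
  have A2: "\<forall>D. squarefree D \<and> \<not> int q dvd D \<longrightarrow>
              H_Dq D q = {E1_mul k P0 | k. odd k \<and>
                            (\<exists>m \<in> M (Legendre D (int q)). [k = m] (mod int Oq))}"
  proof (intro allI impI)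
    fix D assume hD: "squarefree D \<and> \<not> int q dvd D"
    show "H_Dq D q = {E1_mul k P0 | k. odd k \<and> (\<exists>m \<in> M (Legendre D (int q)). [k = m] (mod int Oq))}"
    proof (intro equalityI subsetI)
      fix R assume "R \<in> H_Dq D q"
      then obtain k where R: "R = E1_mul k P0" "odd k" "red_q q R \<in> SD D"
        unfolding H_Dq_def H_def by auto
      define m where "m = k mod int Oq"
      have "m \<in> M (Legendre D (int q))"
      proof -
        have "m \<in> {0..<int Oq}" unfolding m_def using Opos by simp
        moreover have "Rp (nat m) \<in> SD D'" if "squarefree D' \<and> \<not> int q dvd D' \<and> Legendre D' (int q) = Legendre D (int q)" for D'
        proof -
          have "SD D' = SD D" using S_eq that hD by blast
          moreover have "Rp (nat m) = red_q q R" using R red_mul unfolding m_def by simp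
          ultimately show ?thesis using R by simp
        qed
        ultimately show ?thesis unfolding M_def by blast
      qed
      moreover have "[k = m] (mod int Oq)" unfolding m_def by (simp add: cong_def)
      ultimately show "R \<in> {E1_mul k P0 | k. odd k \<and> (\<exists>m \<in> M (Legendre D (int q)). [k = m] (mod int Oq))}"
        using R by blast
    next
      fix R assume "R \<in> {E1_mul k P0 | k. odd k \<and> (\<exists>m \<in> M (Legendre D (int q)). [k = m] (mod int Oq))}"
      then obtain k m where R: "R = E1_mul k P0" "odd k" "m \<in> M (Legendre D (int q))" "[k = m] (mod int Oq)"
        by blast
      have mr: "m \<in> {0..<int Oq}" and mS: "Rp (nat m) \<in> SD D" using R(3) hD unfolding M_def by auto
      have "k mod int Oq = m" using R(4) mr by (simp add: cong_def)
      then have "red_q q R = Rp (nat m)" using R(1) red_mul by simp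
      then show "R \<in> H_Dq D q" unfolding H_Dq_def H_def using R mS by auto
    qed
  qed
  have A3: "1 mod int Oq \<in> M 1"
  proof -
    have "1 mod int Oq \<in> {0..<int Oq}" using Opos by simp
    moreover have "Rp (nat (1 mod int Oq)) = Rq"
    proof -
      have "Oq \<noteq> 1" using Oq_prop red_P0 by auto
      then have "Oq > 1" using Opos by simp
      then have "nat (1 mod int Oq) = 1" by simp
      then have "Rp (nat (1 mod int Oq)) = Rp 1" by simp
      also have "\<dots> = Rq" using red_P0 by simp
      finally show ?thesis .
    qed
    ultimately show ?thesis unfolding M_def using Rq_S by auto
  qed
  have A4: "\<forall>\<epsilon> \<in> {1, -1}. \<forall>k \<in> M \<epsilon>. (- k) mod int Oq \<in> M \<epsilon>"
  proof (intro ballI)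
    fix \<epsilon> k assume "\<epsilon> \<in> {1, -1::int}" "k \<in> M \<epsilon>"
    then have kr: "k \<in> {0..<int Oq}" and kS: "\<And>D. squarefree D \<and> \<not> int q dvd D \<and> Legendre D (int q) = \<epsilon> \<Longrightarrow> Rp (nat k) \<in> SD D"
      unfolding M_def by auto
    have neg: "E1_mul (- k) P0 = E1_neg (E1_mul k P0)"
      using kr by (cases "k = 0") (auto simp: E1_mul_def E1_neg_def)
    have "Rp (nat ((- k) mod int Oq)) = red_q q (E1_mul (- k) P0)" using red_mul by simp
    also have "\<dots> = negq q (red_q q (E1_mul k P0))" using neg red_neg E1_mul_on by simp
    also have "red_q q (E1_mul k P0) = Rp (nat k)" using red_mul kr by simp
    finally have e: "Rp (nat ((- k) mod int Oq)) = negq q (Rp (nat k))" .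
    have "(- k) mod int Oq \<in> {0..<int Oq}" using Opos by simp
    moreover have "\<forall>D. squarefree D \<and> \<not> int q dvd D \<and> Legendre D (int q) = \<epsilon> \<longrightarrow> Rp (nat ((- k) mod int Oq)) \<in> SD D"
      using kS negq_S e by auto
    ultimately show "(- k) mod int Oq \<in> M \<epsilon>" unfolding M_def by blast
  qed
  show ?thesis unfolding Let_def Oeq using part1 A1 A2 A3 A4 by blast
qed



end
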